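(* Let $\mathcal{T}$ be a tree with costs $c:V(\mathcal{T})\to\mathbb{R}_{>0}$, let $a\ge 0$ be such that some vertex $v$ has $c(v)\le a$, and let $\mathcal{T}_{\mathcal{Z}}$ be the auxiliary tree constructed as described (for any choices made in the construction), with vertex costs given by $c$. Then $\texttt{OPT}(\mathcal{T}_{\mathcal{Z}},c)\le\texttt{OPT}(\mathcal{T},c)$.
   Context: Search model: a query to $v$ costs $c(v)$ and returns either that $v$ is the target or the component of (tree)$-v$ containing the target. A decision tree for a tree $T$ is (recursively) a rooted tree whose root is a vertex $v$ of $T$ and whose root subtrees are decision trees for the components of $T-v$, one per component; its cost is the maximum over targets $x$ of the total cost of the vertices on the root-to-$x$ path, and $\texttt{OPT}$ is the minimum cost over all decision trees. A heavy module with respect to $a$ is a set $H\subseteq V(\mathcal{T})$ with $\mathcal{T}[H]$ connected, $c(v)>a$ for all $v\in H$, and maximal with these properties. For $S\subseteq V(\mathcal{T})$, $\mathcal{T}\langle S\rangle$ is the minimal subtree containing $S$; $\mathcal{P}_{\mathcal{T}}(u,v)$ is the set of vertices on the $u$–$v$ path excluding $u,v$. Construction: $\mathcal{X}$ contains one arbitrarily chosen vertex from each heavy module with respect to $a$; $\mathcal{Y}=\mathcal{X}\cup\{v\in V(\mathcal{T}\langle\mathcal{X}\rangle):\deg_{\mathcal{T}\langle\mathcal{X}\rangle}(v)\ge3\}$; $\mathcal{Z}$ consists of $\mathcal{Y}$ together with, for every pair $u,v\in\mathcal{Y}$ with $\mathcal{P}_{\mathcal{T}}(u,v)\ne\emptyset$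 and $\mathcal{P}_{\mathcal{T}}(u,v)\cap\mathcal{Y}=\emptyset$, a minimum-cost vertex of $\mathcal{P}_{\mathcal{T}}(u,v)$. $\mathcal{T}_{\mathcal{Z}}$ has vertex set $\mathcal{Z}$ and edges $uv$ for all $u,v\in\mathcal{Z}$ with $\mathcal{P}_{\mathcal{T}}(u,v)\cap\mathcal{Z}=\emptyset$. *)

theory Defs
  imports Complex_Main
begin

definition is_path :: "('a \<Rightarrow> 'a \<Rightarrow> bool) \<Rightarrow> 'a list \<Rightarrow> bool" where
  "is_path E xs \<longleftrightarrow> xs \<noteq> [] \<and> distinct xs \<and>
     (\<forall>i. Suc i < length xs \<longrightarrow> E (xs ! i) (xs ! Suc i))"

definition is_tree :: "'a set \<Rightarrow> ('a \<Rightarrow> 'a \<Rightarrow> bool) \<Rightarrow> bool" where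
  "is_tree V E \<longleftrightarrow> finite V \<and> V \<noteq> {} \<and>
     (\<forall>u v. E u v \<longrightarrow> u \<in> V \<and> v \<in> V \<and> u \<noteq> v \<and> E v u) \<and>
     (\<forall>u\<in>V. \<forall>v\<in>V. \<exists>!xs. is_path E xs \<and> hd xs = u \<and> last xs = v)"

definition tpath :: "('a \<Rightarrow> 'a \<Rightarrow> bool) \<Rightarrow> 'a \<Rightarrow> 'a \<Rightarrow> 'a list" where
  "tpath E u v = (THE xs. is_path E xs \<and> hd xs = u \<and> last xs = v)"

definition Pint :: "('a \<Rightarrow> 'a \<Rightarrow> bool) \<Rightarrow> 'a \<Rightarrow> 'a \<Rightarrow> 'a set" where
  "Pint E u v = set (tpath E u v) - {u, v}"

definition reach_in :: "('a \<Rightarrow> 'a \<Rightarrow> bool) \<Rightarrow> 'a set \<Rightarrow> 'a \<Rightarrow> 'a \<Rightarrow> bool" where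
  "reach_in E S = (\<lambda>x y. x \<in> S \<and> y \<in> S \<and> E x y)\<^sup>*\<^sup>*"

definition connected_set :: "('a \<Rightarrow> 'a \<Rightarrow> bool) \<Rightarrow> 'a set \<Rightarrow> bool" where
  "connected_set E S \<longleftrightarrow> S \<noteq> {} \<and> (\<forall>x\<in>S. \<forall>y\<in>S. reach_in E S x y)"

definition comps :: "('a \<Rightarrow> 'a \<Rightarrow> bool) \<Rightarrow> 'a set \<Rightarrow> 'a set set" where
  "comps E S = {{y \<in> S. reach_in E S x y} | x. x \<in> S}"

datatype 'a dtree = Node 'a "'a dtree list"

fun dt_verts :: "'a dtree \<Rightarrow> 'a set" where
  "dt_verts (Node v ts) = insert v (\<Union>t\<in>set ts. dt_verts t)"

fun is_dt :: "('a \<Rightarrow> 'a \<Rightarrow> bool) \<Rightarrow> 'a set \<Rightarrow> 'a dtree \<Rightarrow> bool" where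
  "is_dt E S (Node v ts) \<longleftrightarrow> v \<in> S \<and> distinct (map dt_verts ts) \<and>
     set (map dt_verts ts) = comps E (S - {v}) \<and>
     list_all (\<lambda>t. is_dt E (dt_verts t) t) ts"

text \<open>Cost: maximum over targets of the total cost along the root-to-target path.\<close>
fun dt_cost :: "('a \<Rightarrow> real) \<Rightarrow> 'a dtree \<Rightarrow> real" where
  "dt_cost c (Node v ts) = c v + foldr max (map (dt_cost c) ts) 0"

definition OPT :: "('a \<Rightarrow> 'a \<Rightarrow> bool) \<Rightarrow> 'a set \<Rightarrow> ('a \<Rightarrow> real) \<Rightarrow> real" where
  "OPT E S c = (if S = {} then 0 else Inf {dt_cost c t | t. is_dt E S t})"

definition heavy_module :: "'a set \<Rightarrow> ('a \<Rightarrow> 'a \<Rightarrow> bool) \<Rightarrow> ('a \<Rightarrow> real) \<Rightarrow> real \<Rightarrow> 'a set \<Rightarrow> bool" where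
  "heavy_module V E c a H \<longleftrightarrow>
     (let good = (\<lambda>H. H \<subseteq> V \<and> connected_set E H \<and> (\<forall>v\<in>H. c v > a))
      in good H \<and> (\<forall>H'. good H' \<and> H \<subseteq> H' \<longrightarrow> H' = H))"

definition span :: "'a set \<Rightarrow> ('a \<Rightarrow> 'a \<Rightarrow> bool) \<Rightarrow> 'a set \<Rightarrow> 'a set" where
  "span V E S = \<Inter>{W. S \<subseteq> W \<and> W \<subseteq> V \<and> connected_set E W}"

definition deg_in :: "('a \<Rightarrow> 'a \<Rightarrow> bool) \<Rightarrow> 'a set \<Rightarrow> 'a \<Rightarrow> nat" where
  "deg_in E W v = card {w \<in> W. E v w}"

definition valid_X :: "'a set \<Rightarrow> ('a \<Rightarrow> 'a \<Rightarrow> bool) \<Rightarrow> ('a \<Rightarrow> real) \<Rightarrow> real \<Rightarrow> 'a set \<Rightarrow> bool" where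
  "valid_X V E c a X \<longleftrightarrow>
     (\<forall>x\<in>X. \<exists>H. heavy_module V E c a H \<and> x \<in> H) \<and>
     (\<forall>H. heavy_module V E c a H \<longrightarrow> card (X \<inter> H) = 1)"

definition Y_of :: "'a set \<Rightarrow> ('a \<Rightarrow> 'a \<Rightarrow> bool) \<Rightarrow> 'a set \<Rightarrow> 'a set" where
  "Y_of V E X = X \<union> {v \<in> span V E X. deg_in E (span V E X) v \<ge> 3}"

definition valid_pick :: "('a \<Rightarrow> 'a \<Rightarrow> bool) \<Rightarrow> ('a \<Rightarrow> real) \<Rightarrow> 'a set \<Rightarrow> ('a \<Rightarrow> 'a \<Rightarrow> 'a) \<Rightarrow> bool" where
  "valid_pick E c Y f \<longleftrightarrow>
     (\<forall>u\<in>Y. \<forall>v\<in>Y. Pint E u v \<noteq> {} \<and> Pint E u v \<inter> Y = {} \<longrightarrow>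
        f u v = f v u \<and> f u v \<in> Pint E u v \<and> (\<forall>w\<in>Pint E u v. c (f u v) \<le> c w))"

definition Z_of :: "('a \<Rightarrow> 'a \<Rightarrow> bool) \<Rightarrow> 'a set \<Rightarrow> ('a \<Rightarrow> 'a \<Rightarrow> 'a) \<Rightarrow> 'a set" where
  "Z_of E Y f = Y \<union> {f u v | u v. u \<in> Y \<and> v \<in> Y \<and> Pint E u v \<noteq> {} \<and> Pint E u v \<inter> Y = {}}"

definition EZ :: "('a \<Rightarrow> 'a \<Rightarrow> bool) \<Rightarrow> 'a set \<Rightarrow> 'a \<Rightarrow> 'a \<Rightarrow> bool" where
  "EZ E Z u v \<longleftrightarrow> u \<in> Z \<and> v \<in> Z \<and> u \<noteq> v \<and> Pint E u v \<inter> Z = {}"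

end

theory Submission
  imports Defs
begin
lemma is_path_alt: "is_path E xs \<longleftrightarrow> xs \<noteq> [] \<and> distinct xs \<and> successively E xs"
  unfolding is_path_def successively_conv_nth by blast

definition walk :: "('a \<Rightarrow> 'a \<Rightarrow> bool) \<Rightarrow> 'a list \<Rightarrow> bool" where
  "walk E xs \<longleftrightarrow> xs \<noteq> [] \<and> successively E xs"

lemma set_tl_sub: "set (tl xs) \<subseteq> set xs" by (cases xs) auto

lemma walk_app: "walk E xs \<Longrightarrow> walk E ys \<Longrightarrow> last xs = hd ys \<Longrightarrow> walk E (xs @ tl ys)"
  unfolding walk_def
  by (cases ys) (auto simp: successively_append_iff successively_Cons)

lemma reach_consI: "x \<in> A \<Longrightarrow> y \<in> A \<Longrightarrow> E x y \<Longrightarrow> reach_in E A y z \<Longrightarrow> reach_in E A x z"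
  unfolding reach_in_def by (rule converse_rtranclp_into_rtranclp[of _ x y]) simp_all

lemma reach_snocI: "reach_in E A x y \<Longrightarrow> y \<in> A \<Longrightarrow> z \<in> A \<Longrightarrow> E y z \<Longrightarrow> reach_in E A x z"
  unfolding reach_in_def by (rule rtranclp.rtrancl_into_rtrancl[of _ x y]) simp_all

lemma reach_refl: "reach_in E A x x"
  unfolding reach_in_def by simp

lemma reach_induct[consumes 1, case_names base step]:
  assumes "reach_in E A x y" "P x"
    "\<And>y z. reach_in E A x y \<Longrightarrow> P y \<Longrightarrow> y \<in> A \<Longrightarrow> z \<in> A \<Longrightarrow> E y z \<Longrightarrow> P z"
  shows "P y"
  using assms(1) unfolding reach_in_def
proof (induction rule: rtranclp_induct)
  case base then show ?case using assms(2) .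
next
  case (step y z)
  then show ?case using assms(3)[of y z] unfolding reach_in_def by blast
qed

lemma reach_walk:
  assumes "walk E xs" "set xs \<subseteq> A"
  shows "reach_in E A (hd xs) (last xs)"
  using assms
proof (induction xs)
  case Nil then show ?case by (simp add: walk_def)
next
  case (Cons x xs)
  show ?case
  proof (cases "xs = []")
    case True then show ?thesis by (simp add: reach_refl)
  next
    case False
    have e: "E x (hd xs)" and w: "walk E xs"
      using Cons.prems False by (auto simp: walk_def successively_Cons)
    have "reach_in E A (hd xs) (last xs)" using Cons.IH w Cons.prems by auto
    then show ?thesis using e Cons.prems False
      by (auto intro!: reach_consI[of x A "hd xs"])
  qed
qed

lemma walk_reach:
  assumes "reach_in E A x y" "x \<in> A"
  shows "\<exists>xs. walk E xs \<and> hd xs = x \<and> last xs = y \<and> set xs \<subseteq> A"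
  using assms(1)
proof (induction rule: reach_induct)
  case base then show ?case using assms(2) by (intro exI[of _ "[x]"]) (auto simp: walk_def)
next
  case (step y z)
  then obtain xs where xs: "walk E xs" "hd xs = x" "last xs = y" "set xs \<subseteq> A" by blast
  have "walk E (xs @ tl [y, z])"
    using xs step by (intro walk_app) (auto simp: walk_def)
  then show ?case using xs step by (intro exI[of _ "xs @ [z]"]) (auto simp: walk_def)
qed

lemma reach_sym:
  assumes "\<And>u v. E u v \<Longrightarrow> E v u" "reach_in E A x y"
  shows "reach_in E A y x"
  using assms(2)
proof (induction rule: reach_induct)
  case base show ?case by (rule reach_refl)
next
  case (step y z)
  then show ?case using assms(1) by (intro reach_consI[of z A y]) auto
qed

lemma reach_trans: "reach_in E A x y \<Longrightarrow> reach_in E A y z \<Longrightarrow> reach_in E A x z"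
  unfolding reach_in_def by (rule rtranclp_trans)

lemma reach_mono:
  assumes "reach_in E A x y" "A \<subseteq> B" shows "reach_in E B x y"
  using assms(1)
proof (induction rule: reach_induct)
  case base show ?case by (rule reach_refl)
next
  case (step y z)
  have "reach_in E B x y" "y \<in> B" "z \<in> B" "E y z" using step assms(2) by auto
  then show ?case by (rule reach_snocI)
qed

lemma reach_in_set:
  assumes "reach_in E A x y" shows "x = y \<or> (x \<in> A \<and> y \<in> A)"
  using assms by (induction rule: reach_induct) auto

locale tr =
  fixes V :: "'a set" and E :: "'a \<Rightarrow> 'a \<Rightarrow> bool"
  assumes tree: "is_tree V E"
begin

abbreviation "pth \<equiv> tpath E"

lemma finV: "finite V" using tree[unfolded is_tree_def] by (elim conjE)
lemma E_V0: "\<forall>u v. E u v \<longrightarrow> u \<in> V \<and> v \<in> V \<and> u \<noteq> v \<and> E v u"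
  using tree[unfolded is_tree_def] by (elim conjE)
lemma E_V: "E u v \<Longrightarrow> u \<in> V \<and> v \<in> V \<and> u \<noteq> v \<and> E v u" using E_V0 by blast
lemma E_sym: "E u v \<Longrightarrow> E v u" using E_V by blast
lemma ex1: "u \<in> V \<Longrightarrow> v \<in> V \<Longrightarrow> \<exists>!xs. is_path E xs \<and> hd xs = u \<and> last xs = v"
proof -
  have "\<forall>u\<in>V. \<forall>v\<in>V. \<exists>!xs. is_path E xs \<and> hd xs = u \<and> last xs = v"
    using tree[unfolded is_tree_def] by (elim conjE)
  then show "u \<in> V \<Longrightarrow> v \<in> V \<Longrightarrow> ?thesis" by (elim ballE) auto
qed

lemma walk_V: "walk E xs \<Longrightarrow> hd xs \<in> V \<Longrightarrow> set xs \<subseteq> V"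
proof (induction xs)
  case Nil then show ?case by simp
next
  case (Cons x xs) then show ?case
    by (cases xs) (auto simp: walk_def dest: E_V)
qed

lemma tp: "u \<in> V \<Longrightarrow> v \<in> V \<Longrightarrow> is_path E (pth u v) \<and> hd (pth u v) = u \<and> last (pth u v) = v"
  unfolding tpath_def by (rule theI'[OF ex1])

lemma tp_eq: "u \<in> V \<Longrightarrow> v \<in> V \<Longrightarrow> is_path E xs \<Longrightarrow> hd xs = u \<Longrightarrow> last xs = v \<Longrightarrow> pth u v = xs"
  unfolding tpath_def by (rule the1_equality[OF ex1]) auto

lemma tp_ne: "u \<in> V \<Longrightarrow> v \<in> V \<Longrightarrow> pth u v \<noteq> []" using tp is_path_alt by blast
lemma tp_dist: "u \<in> V \<Longrightarrow> v \<in> V \<Longrightarrow> distinct (pth u v)" using tp is_path_alt by blast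
lemma tp_walk: "u \<in> V \<Longrightarrow> v \<in> V \<Longrightarrow> walk E (pth u v)" using tp is_path_alt walk_def by blast
lemma tp_hd: "u \<in> V \<Longrightarrow> v \<in> V \<Longrightarrow> hd (pth u v) = u" using tp by blast
lemma tp_last: "u \<in> V \<Longrightarrow> v \<in> V \<Longrightarrow> last (pth u v) = v" using tp by blast
lemma tp_V: "u \<in> V \<Longrightarrow> v \<in> V \<Longrightarrow> set (pth u v) \<subseteq> V"
  using walk_V tp_walk tp_hd by metis
lemma tp_in1: "u \<in> V \<Longrightarrow> v \<in> V \<Longrightarrow> u \<in> set (pth u v)"
  using tp_ne tp_hd hd_in_set by metis
lemma tp_in2: "u \<in> V \<Longrightarrow> v \<in> V \<Longrightarrow> v \<in> set (pth u v)"
  using tp_ne tp_last last_in_set by metis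

lemma tp_refl: "u \<in> V \<Longrightarrow> pth u u = [u]"
  by (rule tp_eq) (auto simp: is_path_alt)

lemma tp_rev:
  assumes "u \<in> V" "v \<in> V" shows "pth v u = rev (pth u v)"
proof -
  have s: "successively E (pth u v)" and d: "distinct (pth u v)" and n: "pth u v \<noteq> []"
    using tp[OF assms] is_path_alt by blast+
  have "successively (\<lambda>x y. E y x) (pth u v)"
    using s by (rule successively_mono) (simp add: E_sym)
  then have "is_path E (rev (pth u v))" using d n by (simp add: is_path_alt)
  moreover have "hd (rev (pth u v)) = v" "last (rev (pth u v)) = u"
    using n tp_hd[OF assms] tp_last[OF assms] by (simp_all add: hd_rev last_rev)
  ultimately show ?thesis using tp_eq[OF assms(2,1)] by blast
qed

lemma tp_sym_set: assumes "u \<in> V" "v \<in> V" shows "set (pth v u) = set (pth u v)"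
  unfolding tp_rev[OF assms] by simp

lemma walk_sub:
  assumes "walk E xs" "hd xs \<in> V"
  shows "set (pth (hd xs) (last xs)) \<subseteq> set xs"
  using assms
proof (induction "length xs" arbitrary: xs rule: less_induct)
  case less
  have lV: "last xs \<in> V" using walk_V[OF less.prems] less.prems by (auto simp: walk_def)
  show ?case
  proof (cases "distinct xs")
    case True
    then have "is_path E xs" using less.prems by (auto simp: is_path_alt walk_def)
    then show ?thesis using tp_eq[OF less.prems(2) lV] by simp
  next
    case False
    then obtain a y b c where xs: "xs = a @ [y] @ b @ [y] @ c" using not_distinct_decomp by blast
    define ys where "ys = a @ [y] @ c"
    have w: "walk E ys" using less.prems(1) unfolding ys_def xs walk_def
      by (auto simp: successively_append_iff successively_Cons)
    have h: "hd ys = hd xs" "last ys = last xs" unfolding ys_def xs by (cases a; simp)+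
    have "length ys < length xs" unfolding ys_def xs by simp
    then have "set (pth (hd ys) (last ys)) \<subseteq> set ys" using less.hyps w h less.prems by metis
    then show ?thesis using h unfolding ys_def xs by auto
  qed
qed

lemma B4:
  assumes "x \<in> V" "m \<in> V" "y \<in> V"
  shows "set (pth x y) \<subseteq> set (pth x m) \<union> set (pth m y)"
proof -
  have w: "walk E (pth x m @ tl (pth m y))"
    using assms by (intro walk_app tp_walk) (auto simp: tp_hd tp_last)
  have h: "hd (pth x m @ tl (pth m y)) = x" using assms by (simp add: tp_ne tp_hd)
  have l: "last (pth x m @ tl (pth m y)) = y"
  proof (cases "tl (pth m y) = []")
    case True
    then have "pth m y = [m]" using tp_ne[OF assms(2,3)] tp_hd[OF assms(2,3)]
      by (cases "pth m y") auto
    then have "m = y" using tp_last[OF assms(2,3)] by simp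
    then show ?thesis using True assms by (simp add: tp_last)
  next
    case False
    then show ?thesis using assms tp_last tp_ne
      by (metis last_appendR last_tl)
  qed
  have "set (pth x y) \<subseteq> set (pth x m @ tl (pth m y))"
    using walk_sub[OF w] h l assms by simp
  also have "\<dots> \<subseteq> set (pth x m) \<union> set (pth m y)"
    using set_tl_sub[of "pth m y"] by auto
  finally show ?thesis .
qed

lemma split_path:
  assumes "x \<in> V" "y \<in> V" "pth x y = A @ v # B"
  shows "pth x v = A @ [v]" "pth v y = v # B"
proof -
  have p: "is_path E (A @ v # B)" "hd (A @ v # B) = x" "last (A @ v # B) = y"
    using tp[OF assms(1,2)] assms(3) by auto
  have vV: "v \<in> V" using tp_V[OF assms(1,2)] assms(3) by auto
  show "pth x v = A @ [v]"
    apply (rule tp_eq[OF assms(1) vV])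
    using p by (auto simp: is_path_alt successively_append_iff successively_Cons split: if_splits) (cases A; simp)+
  show "pth v y = v # B"
    apply (rule tp_eq[OF vV assms(2)])
    using p by (auto simp: is_path_alt successively_append_iff successively_Cons)
qed

end

lemma last_app_tl: "ys \<noteq> [] \<Longrightarrow> xs \<noteq> [] \<Longrightarrow> last xs = hd ys \<Longrightarrow> last (xs @ tl ys) = last ys"
  by (cases ys) auto

lemma comp_conn:
  assumes sym: "\<And>u v. E u v \<Longrightarrow> E v u" and x: "x \<in> A"
  shows "connected_set E {y \<in> A. reach_in E A x y}"
proof -
  define K where "K = {y \<in> A. reach_in E A x y}"
  have r: "reach_in E K x y" if "reach_in E A x y" for y
    using that
  proof (induction rule: reach_induct)
    case base show ?case by (rule reach_refl)
  next
    case (step y z)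
    have rz: "reach_in E A x z" by (rule reach_snocI[OF step(1) step(2) step(3) step(4)])
    have yK: "y \<in> K" unfolding K_def using step(1) step(2) by simp
    have zK: "z \<in> K" unfolding K_def using rz step(3) by simp
    show ?case by (rule reach_snocI[OF step(5) yK zK step(4)])
  qed
  have "reach_in E K y z" if "y \<in> K" "z \<in> K" for y z
  proof -
    have a: "reach_in E K x y" using that(1) r unfolding K_def by simp
    have b: "reach_in E K x z" using that(2) r unfolding K_def by simp
    show ?thesis by (rule reach_trans[OF reach_sym[OF sym a] b])
  qed
  moreover have "x \<in> K" using x unfolding K_def by (simp add: reach_refl)
  ultimately show ?thesis unfolding connected_set_def K_def[symmetric] by blast
qed

lemma comps_sub: "C \<in> comps E A \<Longrightarrow> C \<subseteq> A" unfolding comps_def by auto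

lemma comps_fin: "finite A \<Longrightarrow> finite (comps E A)"
proof -
  assume "finite A"
  have "comps E A \<subseteq> Pow A" unfolding comps_def by auto
  then show ?thesis using \<open>finite A\<close> finite_subset by blast
qed

lemma comps_Union: "\<Union>(comps E A) = A"
proof
  show "\<Union>(comps E A) \<subseteq> A" unfolding comps_def by auto
  show "A \<subseteq> \<Union>(comps E A)"
  proof
    fix x assume "x \<in> A"
    then have "x \<in> {y \<in> A. reach_in E A x y}" by (simp add: reach_refl)
    then show "x \<in> \<Union>(comps E A)" unfolding comps_def using \<open>x \<in> A\<close> by blast
  qed
qed

lemma in_comp_sub:
  assumes "connected_set E B" "B \<subseteq> A"
  shows "\<exists>C \<in> comps E A. B \<subseteq> C"
proof -
  obtain x where x: "x \<in> B" using assms(1) unfolding connected_set_def by blast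
  have "B \<subseteq> {y \<in> A. reach_in E A x y}"
    using assms x unfolding connected_set_def by (auto intro: reach_mono)
  moreover have "{y \<in> A. reach_in E A x y} \<in> comps E A" using x assms(2) unfolding comps_def by blast
  ultimately show ?thesis by blast
qed

lemma dt_verts_eq: "is_dt G S t \<Longrightarrow> dt_verts t = S"
proof (cases t)
  case (Node v ts)
  assume "is_dt G S t"
  then have "v \<in> S" "set (map dt_verts ts) = comps G (S - {v})" using Node by auto
  then have "dt_verts t = insert v (\<Union>(comps G (S - {v})))" using Node by auto
  moreover have "\<Union>(comps G (S - {v})) = S - {v}" by (rule comps_Union)
  ultimately show ?thesis using \<open>v \<in> S\<close> by auto
qed

lemma foldr_max_ge0: "(0::real) \<le> foldr max xs 0"
  by (induction xs) (auto simp: le_max_iff_disj)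

lemma foldr_max_ge: "x \<in> set xs \<Longrightarrow> x \<le> foldr max xs (0::real)"
  by (induction xs) (auto simp: le_max_iff_disj)

lemma foldr_max_le: "(\<forall>x\<in>set xs. x \<le> M) \<Longrightarrow> (0::real) \<le> M \<Longrightarrow> foldr max xs 0 \<le> M"
  by (induction xs) auto

lemma build:
  assumes "p \<in> A" "finite A" "0 \<le> M"
    "\<forall>Q \<in> comps G (A - {p}). \<exists>t. is_dt G Q t \<and> dt_cost c t \<le> M"
  shows "\<exists>t. is_dt G A t \<and> dt_cost c t \<le> c p + M"
proof -
  obtain qs where qs: "set qs = comps G (A - {p})" "distinct qs"
    using finite_distinct_list[OF comps_fin[of "A - {p}" G]] assms(2) by auto
  obtain g where g: "\<forall>Q \<in> comps G (A - {p}). is_dt G Q (g Q) \<and> dt_cost c (g Q) \<le> M"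
    using bchoice[OF assms(4)] by blast
  define ts where "ts = map g qs"
  have dtv: "\<forall>Q\<in>set qs. dt_verts (g Q) = Q" using g qs(1) dt_verts_eq by blast
  then have mv: "map dt_verts ts = qs"
    unfolding ts_def by (induction qs) auto
  have la: "list_all (\<lambda>t. is_dt G (dt_verts t) t) ts"
    unfolding ts_def list_all_iff using g qs(1) dtv by auto
  have "is_dt G A (Node p ts)" using assms(1) qs mv la by simp
  moreover have "dt_cost c (Node p ts) \<le> c p + M"
  proof -
    have "foldr max (map (dt_cost c) ts) 0 \<le> M"
      using g qs(1) assms(3) unfolding ts_def by (intro foldr_max_le) auto
    then show ?thesis by simp
  qed
  ultimately show ?thesis by blast
qed

lemma dt_cost_zero: "dt_cost (\<lambda>_. 0) t \<le> 0"
proof (induction t)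
  case (Node v ts)
  then have "foldr max (map (dt_cost (\<lambda>_. 0)) ts) 0 \<le> 0"
    by (intro foldr_max_le) auto
  then show ?case by simp
qed

lemma dt_exists: "finite S \<Longrightarrow> S \<noteq> {} \<Longrightarrow> \<exists>t. is_dt G S t"
proof (induction "card S" arbitrary: S rule: less_induct)
  case less
  obtain p where p: "p \<in> S" using less.prems by blast
  have "\<forall>Q \<in> comps G (S - {p}). \<exists>t. is_dt G Q t \<and> dt_cost (\<lambda>_. 0) t \<le> 0"
  proof
    fix Q assume Q: "Q \<in> comps G (S - {p})"
    have sub: "Q \<subseteq> S - {p}" using Q comps_sub by blast
    have ne: "Q \<noteq> {}" using Q unfolding comps_def by (auto simp: reach_refl)
    have "Q \<subset> S" using sub p by blast
    then have "card Q < card S" "finite Q" using less.prems(1)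
      by (auto intro: psubset_card_mono finite_subset)
    then show "\<exists>t. is_dt G Q t \<and> dt_cost (\<lambda>_. 0) t \<le> 0" using less.hyps ne dt_cost_zero by blast
  qed
  then show ?case using build[OF p less.prems(1), of 0 G "\<lambda>_. 0"] by auto
qed

lemma dt_cost_nonneg: "(\<forall>v\<in>dt_verts t. 0 \<le> c v) \<Longrightarrow> 0 \<le> dt_cost c t"
  by (cases t) (auto intro: add_nonneg_nonneg foldr_max_ge0)

lemma OPT_le:
  assumes "S \<noteq> {}" "is_dt G S t" "\<forall>v\<in>S. 0 \<le> c v"
  shows "OPT G S c \<le> dt_cost c t"
proof -
  have "bdd_below {dt_cost c t | t. is_dt G S t}"
    using assms(3) dt_verts_eq dt_cost_nonneg by (intro bdd_belowI[of _ 0]) fastforce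
  then show ?thesis unfolding OPT_def using assms(1,2) by (auto intro: cInf_lower)
qed

lemma OPT_ge:
  assumes "S \<noteq> {}" "finite S" "\<And>t. is_dt G S t \<Longrightarrow> m \<le> dt_cost c t"
  shows "m \<le> OPT G S c"
proof -
  have "{dt_cost c t | t. is_dt G S t} \<noteq> {}" using dt_exists[OF assms(2,1)] by blast
  then show ?thesis unfolding OPT_def using assms(1,3) by (auto intro: cInf_greatest)
qed

context tr
begin

lemma split_ex:
  assumes "x \<in> V" "y \<in> V" "v \<in> set (pth x y)"
  obtains A B where "pth x y = A @ v # B" "pth x v = A @ [v]" "pth v y = v # B"
  using split_list[OF assms(3)] split_path[OF assms(1,2)] by metis

lemma inV: "x \<in> V \<Longrightarrow> y \<in> V \<Longrightarrow> v \<in> set (pth x y) \<Longrightarrow> v \<in> V"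
  using tp_V by blast

lemma split_sets:
  assumes "x \<in> V" "y \<in> V" "v \<in> set (pth x y)"
  shows "set (pth x v) \<subseteq> set (pth x y)" "set (pth v y) \<subseteq> set (pth x y)"
    "set (pth x v) \<inter> set (pth v y) = {v}"
proof -
  obtain A B where ab: "pth x y = A @ v # B" "pth x v = A @ [v]" "pth v y = v # B"
    using split_ex[OF assms] by blast
  have "distinct (A @ v # B)" using tp_dist[OF assms(1,2)] ab by simp
  then show "set (pth x v) \<subseteq> set (pth x y)" "set (pth v y) \<subseteq> set (pth x y)"
    "set (pth x v) \<inter> set (pth v y) = {v}" using ab by auto
qed

lemma len_lt:
  assumes "x \<in> V" "y \<in> V" "v \<in> set (pth x y)" "v \<noteq> x"
  shows "length (pth v y) < length (pth x y)"
proof -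
  obtain A B where ab: "pth x y = A @ v # B" "pth x v = A @ [v]" "pth v y = v # B"
    using split_ex[OF assms(1-3)] by blast
  have "A \<noteq> []" using tp_hd[OF assms(1,2)] ab assms(4) by auto
  then show ?thesis using ab by simp
qed

lemma len_lt2:
  assumes "x \<in> V" "y \<in> V" "v \<in> set (pth x y)" "v \<noteq> y"
  shows "length (pth x v) < length (pth x y)"
proof -
  have vV: "v \<in> V" using inV assms by blast
  have "v \<in> set (pth y x)" using assms tp_sym_set by blast
  then have "length (pth v x) < length (pth y x)" using len_lt assms by blast
  then show ?thesis using tp_rev[OF assms(1) vV] tp_rev[OF assms(1,2)] by simp
qed

lemma betw_trans:
  assumes "x \<in> V" "y \<in> V" "b \<in> set (pth x y)" "a \<in> set (pth x b)"
  shows "b \<in> set (pth a y)"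
proof -
  obtain A B where ab: "pth x y = A @ b # B" "pth x b = A @ [b]" "pth b y = b # B"
    using split_ex[OF assms(1-3)] by blast
  show ?thesis
  proof (cases "a = b")
    case True then show ?thesis using tp_in1 inV assms by blast
  next
    case False
    then have "a \<in> set A" using assms(4) ab by auto
    then obtain A1 A2 where "A = A1 @ a # A2" using split_list by metis
    then have "pth x y = A1 @ a # (A2 @ b # B)" using ab by simp
    then have "pth a y = a # A2 @ b # B" using split_path(2)[OF assms(1,2)] by blast
    then show ?thesis by simp
  qed
qed

lemma median:
  assumes "x \<in> V" "y \<in> V" "z \<in> V"
  shows "\<exists>m. m \<in> set (pth x y) \<and> m \<in> set (pth y z) \<and> m \<in> set (pth x z)"
proof -
  have "\<exists>w \<in> set (pth x y). w \<in> set (pth x z)" using tp_in1 assms by blast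
  then obtain A m B where amb: "pth x y = A @ m # B" "m \<in> set (pth x z)"
    "\<forall>w \<in> set B. w \<notin> set (pth x z)"
    using split_list_last_prop[of "pth x y" "\<lambda>w. w \<in> set (pth x z)"] by blast
  have my: "pth m y = m # B" using split_path(2)[OF assms(1,2) amb(1)] .
  obtain C D where cd: "pth x z = C @ m # D" "pth m z = m # D"
    using split_ex[OF assms(1,3) amb(2)] by blast
  have mV: "m \<in> V" using inV assms amb(2) by blast
  define W where "W = pth y m @ tl (pth m z)"
  have W: "W = rev B @ m # D" unfolding W_def tp_rev[OF mV assms(2)] my cd(2) by simp
  have d1: "distinct (m # B)" using tp_dist[OF mV assms(2)] my by simp
  have d2: "distinct (m # D)" using tp_dist[OF mV assms(3)] cd by simp
  have d3: "set B \<inter> set D = {}" using amb(3) cd(1) by auto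
  have "distinct W" using d1 d2 d3 W by auto
  moreover have "walk E W" unfolding W_def
    using assms mV by (intro walk_app tp_walk) (auto simp: tp_hd tp_last)
  ultimately have "is_path E W" by (simp add: is_path_alt walk_def)
  moreover have "hd W = y" unfolding W_def using tp_ne tp_hd assms mV by simp
  moreover have "last W = z" unfolding W_def using tp_ne tp_hd tp_last assms mV
    by (subst last_app_tl) auto
  ultimately have "pth y z = W" using tp_eq assms by blast
  then show ?thesis using W amb cd by auto
qed

lemma conn_path:
  assumes "connected_set E S" "S \<subseteq> V" "x \<in> S" "y \<in> S"
  shows "set (pth x y) \<subseteq> S"
proof -
  have "reach_in E S x y" using assms unfolding connected_set_def by blast
  then obtain xs where xs: "walk E xs" "hd xs = x" "last xs = y" "set xs \<subseteq> S"
    using walk_reach assms(3) by metis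
  then show ?thesis using walk_sub[OF xs(1)] assms by auto
qed

lemma sep:
  assumes "connected_set E S" "S \<subseteq> V" "x \<in> S - R" "y \<in> S - R"
  shows "reach_in E (S - R) x y \<longleftrightarrow> set (pth x y) \<inter> R = {}"
proof
  assume "reach_in E (S - R) x y"
  then obtain xs where xs: "walk E xs" "hd xs = x" "last xs = y" "set xs \<subseteq> S - R"
    using walk_reach assms(3) by metis
  then show "set (pth x y) \<inter> R = {}" using walk_sub[OF xs(1)] assms by auto
next
  assume "set (pth x y) \<inter> R = {}"
  then have "set (pth x y) \<subseteq> S - R" using conn_path assms by blast
  then show "reach_in E (S - R) x y"
    using reach_walk[OF tp_walk] assms tp_hd tp_last by (metis Diff_iff subsetD)
qed

lemma V_conn: "connected_set E V"
proof -
  have "V \<noteq> {}" using tree unfolding is_tree_def by blast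
  moreover have "reach_in E V x y" if "x \<in> V" "y \<in> V" for x y
    using reach_walk[OF tp_walk[OF that]] tp_V[OF that] tp_hd[OF that] tp_last[OF that] by metis
  ultimately show ?thesis unfolding connected_set_def by blast
qed

lemma comp_sep:
  assumes "connected_set E S" "S \<subseteq> V" "x \<in> S - R"
  shows "{y \<in> S - R. reach_in E (S - R) x y} = {y \<in> S - R. set (pth x y) \<inter> R = {}}"
  using sep[OF assms] by auto

lemma comp_conn_tr: "x \<in> A \<Longrightarrow> connected_set E {y \<in> A. reach_in E A x y}"
  by (rule comp_conn) (auto dest: E_sym)

end

lemma comps_conn_gen:
  assumes "\<And>u v. E u v \<Longrightarrow> E v u" "C \<in> comps E A" shows "connected_set E C"
proof -
  obtain x where "x \<in> A" "C = {y \<in> A. reach_in E A x y}" using assms(2) unfolding comps_def by blast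
  then show ?thesis using comp_conn[of E x A, OF assms(1)] by simp
qed

locale proj = tr V E for V :: "'a set" and E +
  fixes Z :: "'a set" and c :: "'a \<Rightarrow> real"
  assumes ZV: "Z \<subseteq> V" and cpos: "\<forall>v\<in>V. 0 < c v"
    and Kp: "\<And>z1 z2 v. z1 \<in> Z \<Longrightarrow> z2 \<in> Z \<Longrightarrow> v \<in> V \<Longrightarrow> v \<notin> Z \<Longrightarrow> v \<in> set (pth z1 z2) \<Longrightarrow>
      \<exists>p\<in>Z. c p \<le> c v \<and> (\<forall>z z'. z \<in> Z \<longrightarrow> z' \<in> Z \<longrightarrow> v \<in> set (pth z z') \<longrightarrow> p \<in> set (pth z z'))"
begin

lemma ez_reach1:
  assumes "S \<subseteq> V" "p \<in> Z" "x \<in> Z \<inter> S - {p}"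
    "reach_in (EZ E Z) (Z \<inter> S - {p}) x y"
  shows "p \<notin> set (pth x y)"
  using assms(4)
proof (induction rule: reach_induct)
  case base
  have "x \<in> V" using assms by blast
  then show ?case using assms(3) by (auto simp: tp_refl)
next
  case (step y z)
  have V: "x \<in> V" "y \<in> V" "z \<in> V" using assms step by auto
  have "Pint E y z \<inter> Z = {}" using step(4) unfolding EZ_def by blast
  then have "p \<notin> set (pth y z)" using assms(2) step(2,3) unfolding Pint_def by auto
  then show ?case using B4[OF V] step(5) by blast
qed

lemma ez_reach2:
  assumes "connected_set E S" "S \<subseteq> V" "p \<in> Z"
  shows "x \<in> Z \<inter> S - {p} \<Longrightarrow> y \<in> Z \<inter> S - {p} \<Longrightarrow> p \<notin> set (pth x y) \<Longrightarrow>
    reach_in (EZ E Z) (Z \<inter> S - {p}) x y"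
proof (induction "length (pth x y)" arbitrary: x y rule: less_induct)
  case less
  have V: "x \<in> V" "y \<in> V" using less.prems assms by auto
  show ?case
  proof (cases "x = y")
    case True then show ?thesis by (simp add: reach_refl)
  next
    case False
    show ?thesis
    proof (cases "Pint E x y \<inter> Z = {}")
      case True
      then have "EZ E Z x y" using less.prems False unfolding EZ_def by auto
      then show ?thesis using less.prems by (intro reach_consI[OF _ _ _ reach_refl]) auto
    next
      case nd: False
      then obtain z where z: "z \<in> set (pth x y)" "z \<noteq> x" "z \<noteq> y" "z \<in> Z"
        unfolding Pint_def by auto
      have zS: "z \<in> S" using conn_path[OF assms(1,2)] less.prems z by blast
      have zp: "z \<noteq> p" using z less.prems by blast
      have l1: "length (pth x z) < length (pth x y)" using len_lt2[OF V z(1) z(3)] .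
      have l2: "length (pth z y) < length (pth x y)" using len_lt[OF V z(1) z(2)] .
      have p1: "p \<notin> set (pth x z)" and p2: "p \<notin> set (pth z y)"
        using split_sets[OF V z(1)] less.prems by auto
      have "reach_in (EZ E Z) (Z \<inter> S - {p}) x z"
        using less.hyps[OF l1] less.prems z zS zp p1 by blast
      moreover have "reach_in (EZ E Z) (Z \<inter> S - {p}) z y"
        using less.hyps[OF l2] less.prems z zS zp p2 by blast
      ultimately show ?thesis by (rule reach_trans)
    qed
  qed
qed

lemma ez_comp:
  assumes "connected_set E S" "S \<subseteq> V" "p \<in> Z" "Q \<in> comps (EZ E Z) (Z \<inter> S - {p})"
  obtains x where "x \<in> Z \<inter> S - {p}" "Q = {y \<in> Z \<inter> S - {p}. p \<notin> set (pth x y)}"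
proof -
  obtain x where x: "x \<in> Z \<inter> S - {p}" "Q = {y \<in> Z \<inter> S - {p}. reach_in (EZ E Z) (Z \<inter> S - {p}) x y}"
    using assms(4) unfolding comps_def by blast
  have "Q = {y \<in> Z \<inter> S - {p}. p \<notin> set (pth x y)}"
    unfolding x(2) using ez_reach1[OF assms(2,3) x(1)] ez_reach2[OF assms(1-3) x(1)] by blast
  then show ?thesis using that x(1) by blast
qed

lemma sub_comp:
  assumes "connected_set E S" "S \<subseteq> V" "x \<in> S - R"
  shows "connected_set E {y \<in> S - R. set (pth x y) \<inter> R = {}}"
  using comp_sep[OF assms] comp_conn_tr[OF assms(3)] by simp

lemma main:
  "is_dt E S t \<Longrightarrow> S \<subseteq> V \<Longrightarrow> connected_set E S \<Longrightarrow> S' \<subseteq> S \<Longrightarrow> connected_set E S' \<Longrightarrow>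
   Z \<inter> S' \<noteq> {} \<Longrightarrow> \<exists>t'. is_dt (EZ E Z) (Z \<inter> S') t' \<and> dt_cost c t' \<le> dt_cost c t"
proof (induction t arbitrary: S S')
  case (Node v ts)
  have vS: "v \<in> S" and cm: "set (map dt_verts ts) = comps E (S - {v})"
    and ch: "\<forall>tc\<in>set ts. is_dt E (dt_verts tc) tc"
    using Node.prems(1) by (auto simp: list_all_iff)
  define Mx where "Mx = foldr max (map (dt_cost c) ts) 0"
  have Mx0: "0 \<le> Mx" unfolding Mx_def by (rule foldr_max_ge0)
  have cost: "dt_cost c (Node v ts) = c v + Mx" unfolding Mx_def by simp
  have vV: "v \<in> V" using vS Node.prems by blast
  have cv: "0 < c v" using cpos vV by blast
  have S'V: "S' \<subseteq> V" using Node.prems by blast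
  have finZ: "finite (Z \<inter> S')" using finV S'V finite_subset by blast
  have CH: "\<exists>t'. is_dt (EZ E Z) (Z \<inter> S'') t' \<and> dt_cost c t' \<le> Mx"
    if h: "S'' \<subseteq> S - {v}" "connected_set E S''" "Z \<inter> S'' \<noteq> {}" for S''
  proof -
    obtain C where C: "C \<in> comps E (S - {v})" "S'' \<subseteq> C" using in_comp_sub[OF h(2,1)] by blast
    have "C \<in> dt_verts ` set ts" using C(1) cm by simp
    then obtain tc where tc: "tc \<in> set ts" "dt_verts tc = C" by blast
    have CS: "C \<subseteq> V" using comps_sub[OF C(1)] Node.prems by blast
    have Cc: "connected_set E C" using comps_conn_gen[OF _ C(1)] E_sym by blast
    have "is_dt E C tc" using ch tc by auto
    then obtain t' where t': "is_dt (EZ E Z) (Z \<inter> S'') t'" "dt_cost c t' \<le> dt_cost c tc"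
      using Node.IH[OF tc(1) _ CS Cc C(2) h(2,3)] by blast
    have "dt_cost c tc \<le> Mx" unfolding Mx_def using tc(1) by (intro foldr_max_ge) simp
    then show ?thesis using t' by (intro exI[of _ t']) simp
  qed
  show ?case
  proof (cases "v \<in> S'")
    case False
    then have "S' \<subseteq> S - {v}" using Node.prems by blast
    then obtain t' where t': "is_dt (EZ E Z) (Z \<inter> S') t'" "dt_cost c t' \<le> Mx"
      using CH Node.prems(5,6) by blast
    have "dt_cost c t' \<le> dt_cost c (Node v ts)" using t'(2) cv cost by linarith
    then show ?thesis using t'(1) by blast
  next
    case vS': True
    show ?thesis
    proof (cases "v \<in> Z")
      case vZ: True
      have "\<forall>Q \<in> comps (EZ E Z) (Z \<inter> S' - {v}). \<exists>t. is_dt (EZ E Z) Q t \<and> dt_cost c t \<le> Mx"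
      proof
        fix Q assume Q: "Q \<in> comps (EZ E Z) (Z \<inter> S' - {v})"
        obtain x where x: "x \<in> Z \<inter> S' - {v}" "Q = {y \<in> Z \<inter> S' - {v}. v \<notin> set (pth x y)}"
          using ez_comp[OF Node.prems(5) S'V vZ Q] by blast
        define K where "K = {y \<in> S' - {v}. set (pth x y) \<inter> {v} = {}}"
        have x': "x \<in> S' - {v}" using x by blast
        have Kc: "connected_set E K" unfolding K_def by (rule sub_comp[OF Node.prems(5) S'V x'])
        have KS: "K \<subseteq> S - {v}" unfolding K_def using Node.prems(4) by blast
        have ZK: "Z \<inter> K = Q" unfolding K_def x(2) by auto
        have xV: "x \<in> V" using x S'V by blast
        have "x \<in> Q" using x S'V by (auto simp: tp_refl)
        then have "Z \<inter> K \<noteq> {}" using ZK by auto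
        then have "\<exists>t. is_dt (EZ E Z) (Z \<inter> K) t \<and> dt_cost c t \<le> Mx" by (rule CH[OF KS Kc])
        then show "\<exists>t. is_dt (EZ E Z) Q t \<and> dt_cost c t \<le> Mx" unfolding ZK .
      qed
      then obtain t' where t': "is_dt (EZ E Z) (Z \<inter> S') t'" "dt_cost c t' \<le> c v + Mx"
        using build[OF _ finZ Mx0, of v] vS' vZ by blast
      have "dt_cost c t' \<le> dt_cost c (Node v ts)" using t'(2) cost by simp
      then show ?thesis using t'(1) by blast
    next
      case vZ: False
      show ?thesis
      proof (cases "\<exists>z1\<in>Z \<inter> S'. \<exists>z2\<in>Z \<inter> S'. v \<in> set (pth z1 z2)")
        case False
        obtain z0 where z0: "z0 \<in> Z \<inter> S'" using Node.prems(6) by blast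
        have z0': "z0 \<in> S' - {v}" using z0 vZ by blast
        define K where "K = {y \<in> S' - {v}. set (pth z0 y) \<inter> {v} = {}}"
        have Kc: "connected_set E K" unfolding K_def by (rule sub_comp[OF Node.prems(5) S'V z0'])
        have KS: "K \<subseteq> S - {v}" unfolding K_def using Node.prems(4) by blast
        have ZK: "Z \<inter> K = Z \<inter> S'"
        proof
          show "Z \<inter> K \<subseteq> Z \<inter> S'" unfolding K_def by blast
          show "Z \<inter> S' \<subseteq> Z \<inter> K"
          proof
            fix y assume y: "y \<in> Z \<inter> S'"
            then have "v \<notin> set (pth z0 y)" using False z0 by blast
            then show "y \<in> Z \<inter> K" unfolding K_def using y vZ by auto
          qed
        qed
        have ne: "Z \<inter> K \<noteq> {}" using ZK Node.prems(6) by simp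
        obtain t' where t0: "is_dt (EZ E Z) (Z \<inter> K) t'" "dt_cost c t' \<le> Mx"
          using CH[OF KS Kc ne] by blast
        have t': "is_dt (EZ E Z) (Z \<inter> S') t'" "dt_cost c t' \<le> Mx" using t0 ZK by simp_all
        have "dt_cost c t' \<le> dt_cost c (Node v ts)" using t'(2) cv cost by linarith
        then show ?thesis using t'(1) by blast
      next
        case True
        then obtain z1 z2 where z12: "z1 \<in> Z \<inter> S'" "z2 \<in> Z \<inter> S'" "v \<in> set (pth z1 z2)" by blast
        obtain p where p: "p \<in> Z" "c p \<le> c v"
          "\<forall>z z'. z \<in> Z \<longrightarrow> z' \<in> Z \<longrightarrow> v \<in> set (pth z z') \<longrightarrow> p \<in> set (pth z z')"
          using Kp[of z1 z2 v] z12 vV vZ by blast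
        have pS': "p \<in> S'" using p(3) z12 conn_path[OF Node.prems(5) S'V] by blast
        have "\<forall>Q \<in> comps (EZ E Z) (Z \<inter> S' - {p}). \<exists>t. is_dt (EZ E Z) Q t \<and> dt_cost c t \<le> Mx"
        proof
          fix Q assume Q: "Q \<in> comps (EZ E Z) (Z \<inter> S' - {p})"
          obtain x where x: "x \<in> Z \<inter> S' - {p}" "Q = {y \<in> Z \<inter> S' - {p}. p \<notin> set (pth x y)}"
            using ez_comp[OF Node.prems(5) S'V p(1) Q] by blast
          define K where "K = {y \<in> S' - {v, p}. set (pth x y) \<inter> {v, p} = {}}"
          have x': "x \<in> S' - {v, p}" using x vZ by blast
          have Kc: "connected_set E K" unfolding K_def by (rule sub_comp[OF Node.prems(5) S'V x'])
          have KS: "K \<subseteq> S - {v}" unfolding K_def using Node.prems(4) by blast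
          have ZK: "Z \<inter> K = Q" unfolding K_def x(2) using p(3) x vZ by auto
          have "x \<in> Q" using x S'V by (auto simp: tp_refl)
          then have "Z \<inter> K \<noteq> {}" using ZK by auto
          then have "\<exists>t. is_dt (EZ E Z) (Z \<inter> K) t \<and> dt_cost c t \<le> Mx" by (rule CH[OF KS Kc])
        then show "\<exists>t. is_dt (EZ E Z) Q t \<and> dt_cost c t \<le> Mx" unfolding ZK .
        qed
        then obtain t' where t': "is_dt (EZ E Z) (Z \<inter> S') t'" "dt_cost c t' \<le> c p + Mx"
          using build[OF _ finZ Mx0, of p] pS' p(1) by blast
        have "dt_cost c t' \<le> dt_cost c (Node v ts)" using t'(2) p(2) cost by linarith
        then show ?thesis using t'(1) by blast
      qed
    qed
  qed
qed

end

locale constr = tr V E for V :: "'a set" and E +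
  fixes Sp :: "'a set" and Y :: "'a set" and f :: "'a \<Rightarrow> 'a \<Rightarrow> 'a" and c :: "'a \<Rightarrow> real"
  assumes SpV: "Sp \<subseteq> V" and Spc: "connected_set E Sp" and YSp: "Y \<subseteq> Sp"
    and degY: "\<And>q. q \<in> Sp \<Longrightarrow> 3 \<le> deg_in E Sp q \<Longrightarrow> q \<in> Y"
    and vp: "valid_pick E c Y f"
begin

abbreviation "ZZ \<equiv> Z_of E Y f"

lemma pathSp: "x \<in> Sp \<Longrightarrow> y \<in> Sp \<Longrightarrow> set (pth x y) \<subseteq> Sp"
  using conn_path[OF Spc SpV] by blast

lemma Pint_sub: "Pint E u w \<subseteq> set (pth u w)" unfolding Pint_def by blast

lemma Pint_sym: "u \<in> V \<Longrightarrow> w \<in> V \<Longrightarrow> Pint E w u = Pint E u w"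
  unfolding Pint_def using tp_sym_set by blast

lemma pick: "u \<in> Y \<Longrightarrow> w \<in> Y \<Longrightarrow> Pint E u w \<noteq> {} \<Longrightarrow> Pint E u w \<inter> Y = {} \<Longrightarrow>
  f u w = f w u \<and> f u w \<in> Pint E u w \<and> (\<forall>x\<in>Pint E u w. c (f u w) \<le> c x)"
  using vp unfolding valid_pick_def by blast

lemma Z_cases: "z \<in> ZZ \<Longrightarrow> z \<in> Y \<or> (\<exists>u w. u \<in> Y \<and> w \<in> Y \<and> Pint E u w \<noteq> {} \<and> Pint E u w \<inter> Y = {} \<and> z = f u w)"
  unfolding Z_of_def by blast

lemma YZ: "Y \<subseteq> ZZ" unfolding Z_of_def by blast

lemma YV: "Y \<subseteq> V" using YSp SpV by blast

lemma ZSp: "ZZ \<subseteq> Sp"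
proof
  fix z assume z: "z \<in> ZZ"
  show "z \<in> Sp"
  proof (cases "z \<in> Y")
    case True then show ?thesis using YSp by blast
  next
    case False
    then obtain u w where uw: "u \<in> Y" "w \<in> Y" "Pint E u w \<noteq> {}" "Pint E u w \<inter> Y = {}" "z = f u w"
      using Z_cases[OF z] by blast
    then have "z \<in> set (pth u w)" using pick Pint_sub by blast
    then show ?thesis using pathSp uw YSp by blast
  qed
qed

lemma ZV: "ZZ \<subseteq> V" using ZSp SpV by blast

lemma nbr:
  assumes "q \<in> V" "x \<in> V" "q \<noteq> x"
  shows "\<exists>n. E q n \<and> n \<in> set (pth q x) \<and> q \<notin> set (pth n x)"
proof -
  obtain r where r: "pth q x = q # r"
    using tp_ne[OF assms(1,2)] tp_hd[OF assms(1,2)] by (cases "pth q x") auto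
  have "r \<noteq> []" using r tp_last[OF assms(1,2)] assms(3) by auto
  then obtain n r' where r': "r = n # r'" by (cases r) auto
  have p: "pth q x = [q] @ n # r'" using r r' by simp
  have e: "E q n" using tp[OF assms(1,2)] p by (simp add: is_path_alt)
  have d: "distinct (q # n # r')" using tp_dist[OF assms(1,2)] p by simp
  have "pth n x = n # r'" using split_path(2)[OF assms(1,2) p] .
  then have "q \<notin> set (pth n x)" using d by simp
  then show ?thesis using e p by auto
qed

lemma sep2:
  assumes "x \<in> V" "y \<in> V" "n \<in> V" "q \<notin> set (pth n x)" "q \<notin> set (pth n y)"
  shows "q \<notin> set (pth x y)"
  using B4[OF assms(1,3,2)] tp_sym_set[OF assms(3,1)] assms(4,5) by blast

lemma deg3:
  assumes "q \<in> Sp" "a \<in> Sp" "b \<in> Sp" "d \<in> Sp" "q \<noteq> a" "q \<noteq> b" "q \<noteq> d"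
    "q \<in> set (pth a b)" "q \<in> set (pth a d)" "q \<in> set (pth b d)"
  shows "q \<in> Y"
proof -
  have V: "q \<in> V" "a \<in> V" "b \<in> V" "d \<in> V" using assms SpV by auto
  obtain na where na: "E q na" "na \<in> set (pth q a)" "q \<notin> set (pth na a)"
    using nbr[OF V(1,2) assms(5)] by blast
  obtain nb where nb: "E q nb" "nb \<in> set (pth q b)" "q \<notin> set (pth nb b)"
    using nbr[OF V(1,3) assms(6)] by blast
  obtain nd where nd: "E q nd" "nd \<in> set (pth q d)" "q \<notin> set (pth nd d)"
    using nbr[OF V(1,4) assms(7)] by blast
  have nV: "na \<in> V" "nb \<in> V" "nd \<in> V" using na nb nd E_V by auto
  have "na \<noteq> nb" using sep2[OF V(2,3) nV(1) na(3)] nb(3) assms(8) by blast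
  moreover have "na \<noteq> nd" using sep2[OF V(2,4) nV(1) na(3)] nd(3) assms(9) by blast
  moreover have "nb \<noteq> nd" using sep2[OF V(3,4) nV(2) nb(3)] nd(3) assms(10) by blast
  ultimately have c3: "card {na, nb, nd} = 3" by simp
  have sub: "{na, nb, nd} \<subseteq> {w \<in> Sp. E q w}"
    using na nb nd pathSp assms(1-4) by blast
  have "finite {w \<in> Sp. E q w}" using finV SpV finite_subset by (metis (no_types, lifting) mem_Collect_eq subsetI subset_trans)
  then have "card {na, nb, nd} \<le> card {w \<in> Sp. E q w}" using sub by (rule card_mono)
  then have "3 \<le> deg_in E Sp q" unfolding deg_in_def using c3 by simp
  then show ?thesis using degY assms(1) by blast
qed

end

locale side = constr V E Sp Y f c for V :: "'a set" and E Sp Y f c +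
  fixes v :: 'a
  assumes vV: "v \<in> V" and vZ: "v \<notin> Z_of E Y f" and vSp: "v \<in> Sp"
begin

lemma vY: "v \<notin> Y" using vZ YZ by blast

lemma sd_trans: "a \<in> V \<Longrightarrow> b \<in> V \<Longrightarrow> d \<in> V \<Longrightarrow> v \<notin> set (pth a b) \<Longrightarrow> v \<notin> set (pth b d) \<Longrightarrow> v \<notin> set (pth a d)"
  using B4 by blast

lemma sd_sym: "a \<in> V \<Longrightarrow> b \<in> V \<Longrightarrow> v \<notin> set (pth a b) \<Longrightarrow> v \<notin> set (pth b a)"
  using tp_sym_set by blast

lemma Yside:
  assumes z: "z \<in> ZZ" shows "\<exists>y\<in>Y. v \<notin> set (pth z y)"
proof (cases "z \<in> Y")
  case True
  have "z \<in> V" using True YV by blast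
  then show ?thesis using True vY by (intro bexI[of _ z]) (auto simp: tp_refl)
next
  case False
  then obtain a b where ab: "a \<in> Y" "b \<in> Y" "Pint E a b \<noteq> {}" "Pint E a b \<inter> Y = {}" "z = f a b"
    using Z_cases[OF z] by blast
  have zab: "z \<in> set (pth a b)" using pick[OF ab(1-4)] ab(5) Pint_sub by blast
  have V: "a \<in> V" "b \<in> V" "z \<in> V" using ab YV z ZV by auto
  show ?thesis
  proof (rule ccontr)
    assume "\<not> ?thesis"
    then have "v \<in> set (pth z a)" "v \<in> set (pth z b)" using ab by auto
    then have "v \<in> set (pth a z)" "v \<in> set (pth z b)" using tp_sym_set V by auto
    then have "v = z" using split_sets(3)[OF V(1,2) zab] by blast
    then show False using vZ z by blast
  qed
qed

definition closest where
  "closest u \<longleftrightarrow> u \<in> Y \<and> (\<forall>y\<in>Y. v \<notin> set (pth u y) \<longrightarrow> length (pth u v) \<le> length (pth y v))"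

lemma exists_closest:
  assumes "y0 \<in> Y" shows "\<exists>u. closest u \<and> v \<notin> set (pth y0 u)"
proof -
  have y0V: "y0 \<in> V" using assms YV by blast
  have "y0 \<in> Y \<and> v \<notin> set (pth y0 y0)" using assms vY tp_refl[OF y0V] by auto
  then obtain u where u: "u \<in> Y \<and> v \<notin> set (pth y0 u)"
    "\<forall>y. y \<in> Y \<and> v \<notin> set (pth y0 y) \<longrightarrow> length (pth u v) \<le> length (pth y v)"
    using ex_has_least_nat[of "\<lambda>y. y \<in> Y \<and> v \<notin> set (pth y0 y)" y0 "\<lambda>y. length (pth y v)"] by blast
  have "closest u" unfolding closest_def
  proof (intro conjI ballI impI)
    show "u \<in> Y" using u by blast
    fix y assume y: "y \<in> Y" "v \<notin> set (pth u y)"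
    have "v \<notin> set (pth y0 y)" using sd_trans[of y0 u y] y0V u(1) y YV by blast
    then show "length (pth u v) \<le> length (pth y v)" using u(2) y by blast
  qed
  then show ?thesis using u by blast
qed

lemma closest_path:
  assumes "closest u" "y \<in> Y" "y \<in> set (pth u v)" shows "y = u"
proof (rule ccontr)
  assume ne: "y \<noteq> u"
  have V: "u \<in> V" "y \<in> V" using assms YV unfolding closest_def by auto
  have "v \<in> set (pth y v)" using tp_in2 V vV by blast
  moreover have "v \<noteq> y" using assms(2) vY by blast
  ultimately have "v \<notin> set (pth u y)" using split_sets(3)[OF V(1) vV assms(3)] by blast
  then have "length (pth u v) \<le> length (pth y v)" using assms(1,2) unfolding closest_def by blast
  moreover have "length (pth y v) < length (pth u v)" using len_lt[OF V(1) vV assms(3)] ne by blast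
  ultimately show False by simp
qed

lemma claimA:
  assumes "closest u" "y \<in> Y" "v \<notin> set (pth u y)" shows "u \<in> set (pth y v)"
proof -
  have uY: "u \<in> Y" using assms(1) unfolding closest_def by blast
  have V: "u \<in> V" "y \<in> V" using uY assms YV by auto
  obtain m where m: "m \<in> set (pth u y)" "m \<in> set (pth y v)" "m \<in> set (pth u v)"
    using median[OF V vV] by blast
  have mv: "m \<noteq> v" using m(1) assms(3) by blast
  show ?thesis
  proof (cases "m = u")
    case True then show ?thesis using m by simp
  next
    case mu: False
    show ?thesis
    proof (cases "m = y")
      case True
      then have "y = u" using closest_path[OF assms(1,2)] m(3) by blast
      then show ?thesis using mu True by blast
    next
      case my: False
      have mSp: "m \<in> Sp" using pathSp[of u v] uY YSp vSp m(3) by blast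
      have "m \<in> set (pth u v)" using m by blast
      have "m \<in> set (pth y v)" using m by blast
      have "m \<in> Y"
        using deg3[OF mSp, of u y v] uY assms(2) YSp vSp mu my mv m by blast
      then have "m = u" using closest_path[OF assms(1)] m(3) by blast
      then show ?thesis using mu by blast
    qed
  qed
qed

lemma no3:
  assumes "u \<in> Y" "w \<in> Y" "y \<in> Y" "v \<in> set (pth u w)" "v \<in> set (pth u y)" "v \<in> set (pth w y)"
  shows False
proof -
  have "v \<in> Y" using deg3[OF vSp, of u w y] assms YSp vY by blast
  then show False using vY by blast
qed

lemma no3Z:
  assumes "u \<in> Y" "w \<in> Y" "v \<in> set (pth u w)" "z \<in> ZZ"
  shows "v \<notin> set (pth u z) \<or> v \<notin> set (pth w z)"
proof (rule ccontr)
  assume a: "\<not> ?thesis"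
  obtain y where y: "y \<in> Y" "v \<notin> set (pth z y)" using Yside[OF assms(4)] by blast
  have V: "u \<in> V" "w \<in> V" "y \<in> V" "z \<in> V" using assms y YV ZV by auto
  have yz: "v \<notin> set (pth y z)" using sd_sym[OF V(4,3)] y by blast
  have "v \<in> set (pth u y)" using sd_trans[OF V(1,3,4)] a yz by blast
  moreover have "v \<in> set (pth w y)" using sd_trans[OF V(2,3,4)] a yz by blast
  ultimately show False using no3 assms y by blast
qed

lemma Gl:
  assumes cu: "closest u" and cw: "closest w" and vuw: "v \<in> set (pth u w)"
    and y: "y \<in> Y" "y' \<in> Y" "Pint E y y' \<inter> Y = {}" "z \<in> set (pth y y')"
    and zu: "v \<notin> set (pth u z)" and vuy: "v \<in> set (pth u y)"
  shows "y = w \<and> y' = u"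
proof -
  have uY: "u \<in> Y" and wY: "w \<in> Y" using cu cw unfolding closest_def by auto
  have V: "u \<in> V" "w \<in> V" "y \<in> V" "y' \<in> V" using uY wY y YV by auto
  have zV: "z \<in> V" using inV V(3,4) y(4) by blast
  have wy: "v \<notin> set (pth w y)" using no3Z[OF uY wY vuw] y(1) YZ vuy by blast
  have wyv: "w \<in> set (pth y v)" using claimA[OF cw y(1) wy] .
  show ?thesis
  proof (cases "v \<in> set (pth u y')")
    case True
    have wy': "v \<notin> set (pth w y')" using no3Z[OF uY wY vuw] y(2) YZ True by blast
    have "v \<notin> set (pth y y')" using sd_trans[OF V(3,2,4)] sd_sym[OF V(2,3) wy] wy' by blast
    then have "v \<notin> set (pth z y)" using split_sets(1)[OF V(3,4) y(4)] tp_sym_set[OF V(3) zV] by blast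
    then have "v \<notin> set (pth u y)" using sd_trans[OF V(1) zV V(3)] zu by blast
    then show ?thesis using vuy by blast
  next
    case False
    have uy'v: "u \<in> set (pth y' v)" using claimA[OF cu y(2) False] .
    have vyy: "v \<in> set (pth y y')"
    proof (rule ccontr)
      assume "v \<notin> set (pth y y')"
      then have "v \<notin> set (pth w y')" using sd_trans[OF V(2,3,4)] wy by blast
      then have "v \<notin> set (pth w u)" using sd_trans[OF V(2,4,1)] sd_sym[OF V(1,4) False] by blast
      then show False using vuw tp_sym_set[OF V(1,2)] by blast
    qed
    have "set (pth y v) \<subseteq> set (pth y y')" "set (pth v y') \<subseteq> set (pth y y')"
      using split_sets[OF V(3,4) vyy] by auto
    then have in1: "w \<in> set (pth y y')" and in2: "u \<in> set (pth y y')"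
      using wyv uy'v tp_sym_set[OF V(4) vV] by auto
    have "w \<in> {y, y'}" using in1 y(3) wY unfolding Pint_def by blast
    moreover have "u \<in> {y, y'}" using in2 y(3) uY unfolding Pint_def by blast
    moreover have "u \<noteq> y" using vuy tp_refl[OF V(1)] vY uY by auto
    moreover have "w \<noteq> y'" using False vuw by blast
    ultimately show ?thesis by blast
  qed
qed

lemma F:
  assumes cu: "closest u" and cw: "closest w" and vuw: "v \<in> set (pth u w)"
    and PY: "Pint E u w \<inter> Y = {}" and pv: "f u w \<in> set (pth u v)"
    and z: "z \<in> ZZ" and zu: "v \<notin> set (pth u z)"
  shows "f u w \<in> set (pth z v)"
proof -
  have uY: "u \<in> Y" and wY: "w \<in> Y" using cu cw unfolding closest_def by auto
  have V: "u \<in> V" "w \<in> V" using uY wY YV by auto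
  have zV: "z \<in> V" using z ZV by blast
  have uw: "u \<noteq> w" using vuw tp_refl[OF V(1)] vY uY by auto
  have vP: "v \<in> Pint E u w" using vuw vY uY wY unfolding Pint_def by auto
  have pk: "f u w = f w u" using pick[OF uY wY _ PY] vP by blast
  have viaU: "f u w \<in> set (pth z v)" if "u \<in> set (pth z v)"
    using split_sets(2)[OF zV vV that] pv by blast
  show ?thesis
  proof (cases "z \<in> Y")
    case True
    then show ?thesis using viaU claimA[OF cu True] zu sd_sym[OF V(1) zV] by blast
  next
    case False
    then obtain y y' where yy: "y \<in> Y" "y' \<in> Y" "Pint E y y' \<noteq> {}" "Pint E y y' \<inter> Y = {}" "z = f y y'"
      using Z_cases[OF z] by blast
    have Vy: "y \<in> V" "y' \<in> V" using yy YV by auto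
    have pk2: "f y y' = f y' y" "z \<in> Pint E y y'" using pick[OF yy(1-4)] yy(5) by auto
    have zyy: "z \<in> set (pth y y')" using pk2 Pint_sub by blast
    show ?thesis
    proof (cases "v \<in> set (pth u y)")
      case True
      have "y = w \<and> y' = u" using Gl[OF cu cw vuw yy(1,2,4) zyy zu True] .
      then have "z = f u w" using yy(5) pk by simp
      then show ?thesis using tp_in1 zV vV by simp
    next
      case nuy: False
      show ?thesis
      proof (cases "v \<in> set (pth u y')")
        case True
        have "Pint E y' y \<inter> Y = {}" using yy(4) Pint_sym[OF Vy] by simp
        moreover have "z \<in> set (pth y' y)" using zyy tp_sym_set[OF Vy] by simp
        ultimately have "y' = w \<and> y = u" using Gl[OF cu cw vuw yy(2,1)] zu True by blast
        then have "z = f u w" using yy(5) by simp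
        then show ?thesis using tp_in1 zV vV by simp
      next
        case nuy': False
        have a1: "u \<in> set (pth y v)" using claimA[OF cu yy(1) nuy] .
        have a2: "u \<in> set (pth y' v)" using claimA[OF cu yy(2) nuy'] .
        have "z \<in> set (pth y u) \<or> z \<in> set (pth y' u)"
          using B4[OF Vy(1) V(1) Vy(2)] zyy tp_sym_set[OF V(1) Vy(2)] by blast
        then have "u \<in> set (pth z v)"
          using betw_trans[OF Vy(1) vV a1] betw_trans[OF Vy(2) vV a2] by blast
        then show ?thesis by (rule viaU)
      qed
    qed
  qed
qed

lemma H:
  assumes cu: "closest u" and cw: "closest w" and vuw: "v \<in> set (pth u w)"
    and PY: "Pint E u w \<inter> Y = {}" and pv: "f u w \<in> set (pth u v)"
    and z: "z \<in> ZZ" "z' \<in> ZZ" "v \<in> set (pth z z')"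
  shows "f u w \<in> set (pth z z')"
proof -
  have uY: "u \<in> Y" and wY: "w \<in> Y" using cu cw unfolding closest_def by auto
  have V: "u \<in> V" "w \<in> V" "z \<in> V" "z' \<in> V" using uY wY YV z ZV by auto
  show ?thesis
  proof (cases "v \<in> set (pth u z)")
    case False
    have "f u w \<in> set (pth z v)" using F[OF cu cw vuw PY pv z(1) False] .
    then show ?thesis using split_sets(1)[OF V(3,4) z(3)] by blast
  next
    case True
    show ?thesis
    proof (cases "v \<in> set (pth u z')")
      case False
      have "f u w \<in> set (pth z' v)" using F[OF cu cw vuw PY pv z(2) False] .
      moreover have "v \<in> set (pth z' z)" using z(3) tp_sym_set[OF V(3,4)] by blast
      ultimately show ?thesis using split_sets(1)[OF V(4,3)] tp_sym_set[OF V(3,4)] by blast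
    next
      case True2: True
      have "v \<notin> set (pth w z)" "v \<notin> set (pth w z')"
        using no3Z[OF uY wY vuw] z True True2 by blast+
      then have "v \<notin> set (pth z z')" using sd_trans[OF V(3,2,4)] sd_sym[OF V(2,3)] by blast
      then show ?thesis using z(3) by blast
    qed
  qed
qed

lemma Kside:
  assumes z12: "z1 \<in> ZZ" "z2 \<in> ZZ" "v \<in> set (pth z1 z2)"
  shows "\<exists>p\<in>ZZ. c p \<le> c v \<and> (\<forall>z z'. z \<in> ZZ \<longrightarrow> z' \<in> ZZ \<longrightarrow> v \<in> set (pth z z') \<longrightarrow> p \<in> set (pth z z'))"
proof -
  have Vz: "z1 \<in> V" "z2 \<in> V" using z12 ZV by auto
  obtain ya where ya: "ya \<in> Y" "v \<notin> set (pth z1 ya)" using Yside[OF z12(1)] by blast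
  obtain yb where yb: "yb \<in> Y" "v \<notin> set (pth z2 yb)" using Yside[OF z12(2)] by blast
  obtain u where u: "closest u" "v \<notin> set (pth ya u)" using exists_closest[OF ya(1)] by blast
  obtain w where w: "closest w" "v \<notin> set (pth yb w)" using exists_closest[OF yb(1)] by blast
  have uY: "u \<in> Y" and wY: "w \<in> Y" using u w unfolding closest_def by auto
  have V: "ya \<in> V" "yb \<in> V" "u \<in> V" "w \<in> V" using ya yb uY wY YV by auto
  have vuw: "v \<in> set (pth u w)"
  proof (rule ccontr)
    assume a: "v \<notin> set (pth u w)"
    have "v \<notin> set (pth z1 u)" using sd_trans[OF Vz(1) V(1,3)] ya u by blast
    then have "v \<notin> set (pth z1 w)" using sd_trans[OF Vz(1) V(3,4)] a by blast
    then have "v \<notin> set (pth z1 yb)" using sd_trans[OF Vz(1) V(4,2)] sd_sym[OF V(2,4)] w by blast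
    then have "v \<notin> set (pth z1 z2)" using sd_trans[OF Vz(1) V(2) Vz(2)] sd_sym[OF Vz(2) V(2)] yb by blast
    then show False using z12 by blast
  qed
  have PY: "Pint E u w \<inter> Y = {}"
  proof (rule ccontr)
    assume "Pint E u w \<inter> Y \<noteq> {}"
    then obtain y where y: "y \<in> Y" "y \<in> set (pth u w)" "y \<noteq> u" "y \<noteq> w"
      unfolding Pint_def by blast
    have "y \<in> set (pth u v) \<or> y \<in> set (pth w v)"
      using B4[OF V(3) vV V(4)] y(2) tp_sym_set[OF vV V(4)] by blast
    then show False using closest_path[OF u(1) y(1)] closest_path[OF w(1) y(1)] y by blast
  qed
  have vP: "v \<in> Pint E u w" using vuw vY uY wY unfolding Pint_def by auto
  have pk: "f u w = f w u" "f u w \<in> Pint E u w" "c (f u w) \<le> c v"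
    using pick[OF uY wY _ PY] vP by blast+
  have pZ: "f u w \<in> ZZ" using uY wY vP PY unfolding Z_of_def by blast
  have "f u w \<in> set (pth u v) \<or> f u w \<in> set (pth w v)"
    using B4[OF V(3) vV V(4)] pk(2) Pint_sub tp_sym_set[OF vV V(4)] by blast
  moreover have PY': "Pint E w u \<inter> Y = {}" using PY Pint_sym[OF V(3,4)] by simp
  moreover have vwu: "v \<in> set (pth w u)" using vuw tp_sym_set[OF V(3,4)] by blast
  ultimately have "\<forall>z z'. z \<in> ZZ \<longrightarrow> z' \<in> ZZ \<longrightarrow> v \<in> set (pth z z') \<longrightarrow> f u w \<in> set (pth z z')"
    using H[OF u(1) w(1) vuw PY] H[OF w(1) u(1) vwu PY'] pk(1) by metis
  then show ?thesis using pZ pk(3) by blast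
qed

end

context constr
begin

lemma Kprop:
  assumes "z1 \<in> ZZ" "z2 \<in> ZZ" "v \<in> V" "v \<notin> ZZ" "v \<in> set (pth z1 z2)"
  shows "\<exists>p\<in>ZZ. c p \<le> c v \<and> (\<forall>z z'. z \<in> ZZ \<longrightarrow> z' \<in> ZZ \<longrightarrow> v \<in> set (pth z z') \<longrightarrow> p \<in> set (pth z z'))"
proof -
  have "v \<in> Sp" using pathSp assms ZSp by blast
  then interpret side V E Sp Y f c v using assms by unfold_locales auto
  show ?thesis using Kside assms by blast
qed

end

context tr
begin

lemma path_reach: "a \<in> V \<Longrightarrow> b \<in> V \<Longrightarrow> set (pth a b) \<subseteq> A \<Longrightarrow> reach_in E A a b"
  using reach_walk[OF tp_walk, of a b A] tp_hd tp_last by metis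

lemma span_eq:
  assumes XV: "X \<subseteq> V" and Xne: "X \<noteq> {}"
  shows "span V E X = {w. \<exists>x\<in>X. \<exists>x'\<in>X. w \<in> set (pth x x')}"
    and "connected_set E {w. \<exists>x\<in>X. \<exists>x'\<in>X. w \<in> set (pth x x')}"
    and "{w. \<exists>x\<in>X. \<exists>x'\<in>X. w \<in> set (pth x x')} \<subseteq> V"
    and "X \<subseteq> {w. \<exists>x\<in>X. \<exists>x'\<in>X. w \<in> set (pth x x')}"
proof -
  define P where "P = {w. \<exists>x\<in>X. \<exists>x'\<in>X. w \<in> set (pth x x')}"
  have PV: "P \<subseteq> V" unfolding P_def using XV tp_V by blast
  have XP: "X \<subseteq> P" unfolding P_def using XV tp_in1 by blast
  obtain x0 where x0: "x0 \<in> X" using Xne by blast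
  have r0: "reach_in E P x0 w" if w: "w \<in> P" for w
  proof -
    obtain x x' where xx: "x \<in> X" "x' \<in> X" "w \<in> set (pth x x')" using w unfolding P_def by blast
    have "set (pth x0 x) \<subseteq> P" unfolding P_def using x0 xx by blast
    then have a: "reach_in E P x0 x" using path_reach x0 xx XV by blast
    have "set (pth x w) \<subseteq> P" using split_sets(1)[of x x' w] xx XV unfolding P_def by blast
    then have b: "reach_in E P x w" using path_reach xx XV w PV by blast
    show ?thesis using reach_trans[OF a b] .
  qed
  have Pc: "connected_set E P" unfolding connected_set_def
  proof (intro conjI ballI)
    show "P \<noteq> {}" using XP x0 by blast
    fix a b assume "a \<in> P" "b \<in> P"
    then show "reach_in E P a b" using r0 reach_sym[of E, OF E_sym] reach_trans by metis
  qed
  have "span V E X = P"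
  proof
    show "span V E X \<subseteq> P" unfolding span_def using PV XP Pc by blast
    show "P \<subseteq> span V E X" unfolding span_def
    proof (rule Inter_greatest)
      fix W assume "W \<in> {W. X \<subseteq> W \<and> W \<subseteq> V \<and> connected_set E W}"
      then have W: "X \<subseteq> W" "W \<subseteq> V" "connected_set E W" by auto
      show "P \<subseteq> W" unfolding P_def using conn_path[OF W(3,2)] W(1) by blast
    qed
  qed
  then show "span V E X = {w. \<exists>x\<in>X. \<exists>x'\<in>X. w \<in> set (pth x x')}"
    and "connected_set E {w. \<exists>x\<in>X. \<exists>x'\<in>X. w \<in> set (pth x x')}"
    and "{w. \<exists>x\<in>X. \<exists>x'\<in>X. w \<in> set (pth x x')} \<subseteq> V"
    and "X \<subseteq> {w. \<exists>x\<in>X. \<exists>x'\<in>X. w \<in> set (pth x x')}"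
    using Pc PV XP unfolding P_def by auto
qed

lemma span_empty: "Y_of V E {} = {}"
proof -
  have "deg_in E (span V E {}) y < 3" if y: "y \<in> span V E {}" for y
  proof -
    have "span V E {} \<subseteq> V" unfolding span_def using V_conn by blast
    then have yV: "y \<in> V" using y by blast
    have "connected_set E {y}" unfolding connected_set_def by (simp add: reach_refl)
    then have "span V E {} \<subseteq> {y}" unfolding span_def using yV by blast
    then have e: "{w \<in> span V E {}. E y w} = {}" using E_V by blast
    show ?thesis unfolding deg_in_def e by simp
  qed
  then show ?thesis unfolding Y_of_def by force
qed

end

theorem lemma12:
  fixes V :: "'a set" and E :: "'a \<Rightarrow> 'a \<Rightarrow> bool" and c :: "'a \<Rightarrow> real"
    and a :: real and X :: "'a set" and f :: "'a \<Rightarrow> 'a \<Rightarrow> 'a"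
  assumes "is_tree V E"
    and "\<forall>v\<in>V. c v > 0"
    and "a \<ge> 0"
    and "\<exists>v\<in>V. c v \<le> a"
    and "valid_X V E c a X"
    and "valid_pick E c (Y_of V E X) f"
  shows "OPT (EZ E (Z_of E (Y_of V E X) f)) (Z_of E (Y_of V E X) f) c \<le> OPT E V c"
proof -
  interpret tr V E using assms(1) by unfold_locales
  have Vne: "V \<noteq> {}" using assms(1) unfolding is_tree_def by blast
  have XV: "X \<subseteq> V"
  proof
    fix x assume "x \<in> X"
    then obtain H where "heavy_module V E c a H" "x \<in> H" using assms(5) unfolding valid_X_def by blast
    then show "x \<in> V" unfolding heavy_module_def Let_def by blast
  qed
  define Y where "Y = Y_of V E X"
  define Z where "Z = Z_of E Y f"
  have c0: "\<forall>v\<in>V. 0 \<le> c v" using assms(2) by auto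
  have OPT0: "0 \<le> OPT E V c"
    by (rule OPT_ge[OF Vne finV]) (use dt_verts_eq dt_cost_nonneg c0 in metis)
  show ?thesis
  proof (cases "Z = {}")
    case True
    then have "OPT (EZ E Z) Z c = 0" by (simp add: OPT_def)
    then show ?thesis using OPT0 unfolding Z_def Y_def by simp
  next
    case False
    have Xne: "X \<noteq> {}"
    proof
      assume "X = {}"
      then have "Y = {}" unfolding Y_def using span_empty by simp
      then have "Z = {}" unfolding Z_def Z_of_def by simp
      then show False using False by blast
    qed
    define Sp where "Sp = span V E X"
    have Sp: "connected_set E Sp" "Sp \<subseteq> V" "X \<subseteq> Sp"
      using span_eq[OF XV Xne] unfolding Sp_def by auto
    interpret constr V E Sp Y f c
    proof unfold_locales
      show "Sp \<subseteq> V" "connected_set E Sp" by (fact Sp(2), fact Sp(1))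
      show "Y \<subseteq> Sp" unfolding Y_def Y_of_def Sp_def using Sp(3) Sp_def by blast
      show "\<And>q. q \<in> Sp \<Longrightarrow> 3 \<le> deg_in E Sp q \<Longrightarrow> q \<in> Y"
        unfolding Y_def Y_of_def Sp_def by blast
      show "valid_pick E c Y f" using assms(6) unfolding Y_def .
    qed
    interpret proj V E Z c
    proof unfold_locales
      show "Z \<subseteq> V" unfolding Z_def using ZV .
      show "\<forall>v\<in>V. 0 < c v" using assms(2) .
      show "\<And>z1 z2 v. z1 \<in> Z \<Longrightarrow> z2 \<in> Z \<Longrightarrow> v \<in> V \<Longrightarrow> v \<notin> Z \<Longrightarrow> v \<in> set (pth z1 z2) \<Longrightarrow>
        \<exists>p\<in>Z. c p \<le> c v \<and> (\<forall>z z'. z \<in> Z \<longrightarrow> z' \<in> Z \<longrightarrow> v \<in> set (pth z z') \<longrightarrow> p \<in> set (pth z z'))"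
        unfolding Z_def by (rule Kprop)
    qed
    have ZV': "Z \<inter> V = Z" using ZV unfolding Z_def by blast
    have cZ: "\<forall>v\<in>Z. 0 \<le> c v" using c0 ZV' by blast
    have "OPT (EZ E Z) Z c \<le> OPT E V c"
    proof (rule OPT_ge[OF Vne finV])
      fix t assume t: "is_dt E V t"
      obtain t' where t': "is_dt (EZ E Z) (Z \<inter> V) t'" "dt_cost c t' \<le> dt_cost c t"
        using main[OF t _ V_conn _ V_conn] False ZV' by auto
      have "OPT (EZ E Z) Z c \<le> dt_cost c t'" using OPT_le[OF False _ cZ] t'(1) ZV' by simp
      then show "OPT (EZ E Z) Z c \<le> dt_cost c t" using t'(2) by linarith
    qed
    then show ?thesis unfolding Z_def Y_def .
  qed
qed

end
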